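(* The set $V=\{(y,x)\in M:\max_{1\le i\le d}e^{-\lambda_iy/2}|x_i|\le1\}$ is geodesically convex in $(M,g)$.
   Context: Let $d\ge1$, $0<\lambda_1\le\cdots\le\lambda_d$, and $M$ be $\mathbb{R}^{d+1}$ with coordinates $(y,x)=(y,x_1,\dots,x_d)$ and the Riemannian metric $g=dy^2+\sum_{i=1}^d e^{-2\lambda_i y}dx_i^2$. *)

theory Defs
  imports "HOL-Analysis.Analysis"
begin

(* Points of M = R^{d+1} are pairs (y, x) with y :: real and x :: nat => real,
   where only the coordinates x 1, ..., x d are meaningful.
   The metric is g = dy^2 + sum_{i=1..d} exp(-2 lam_i y) dx_i^2. *)

(* A geodesic of (M,g), parametrised on [0,1]: a C^2-type curve t |-> (Y t, X . t)
   satisfying the geodesic equations of g (Christoffel symbols written out):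
     Y'' + sum_i lam_i exp(-2 lam_i Y) (X_i')^2 = 0,
     X_i'' - 2 lam_i Y' X_i' = 0. *)
definition geodesic ::
  "nat \<Rightarrow> (nat \<Rightarrow> real) \<Rightarrow> (real \<Rightarrow> real) \<Rightarrow> (nat \<Rightarrow> real \<Rightarrow> real) \<Rightarrow> bool" where
  "geodesic d lam Y X \<longleftrightarrow>
     (\<exists>Y' Y'' X' X''. \<forall>t\<in>{0..1::real}.
        (Y has_real_derivative Y' t) (at t within {0..1}) \<and>
        (Y' has_real_derivative Y'' t) (at t within {0..1}) \<and>
        (\<forall>i\<in>{1..d}. (X i has_real_derivative X' i t) (at t within {0..1}) \<and>
                     (X' i has_real_derivative X'' i t) (at t within {0..1})) \<and>
        Y'' t + (\<Sum>i=1..d. lam i * exp (-2 * lam i * Y t) * (X' i t)^2) = 0 \<and>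
        (\<forall>i\<in>{1..d}. X'' i t - 2 * lam i * Y' t * X' i t = 0))"

definition geodesically_convex ::
  "nat \<Rightarrow> (nat \<Rightarrow> real) \<Rightarrow> (real \<times> (nat \<Rightarrow> real)) set \<Rightarrow> bool" where
  "geodesically_convex d lam S \<longleftrightarrow>
     (\<forall>Y X. geodesic d lam Y X \<longrightarrow> (Y 0, (\<lambda>i. X i 0)) \<in> S \<longrightarrow> (Y 1, (\<lambda>i. X i 1)) \<in> S
        \<longrightarrow> (\<forall>t\<in>{0..1}. (Y t, (\<lambda>i. X i t)) \<in> S))"

definition Vset :: "nat \<Rightarrow> (nat \<Rightarrow> real) \<Rightarrow> (real \<times> (nat \<Rightarrow> real)) set" where
  "Vset d lam = {(y, x). Max ((\<lambda>i. exp (- lam i * y / 2) * \<bar>x i\<bar>) ` {1..d}) \<le> 1}"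

end

theory Submission imports Defs begin

lemma int_deriv:
  assumes "(f has_real_derivative D) (at s within {0..1})" "s \<in> {0<..<1}"
  shows "(f has_real_derivative D) (at s)"
proof -
  have e: "at s within {0..1} = at (s::real)" using assms(2) by (intro at_within_interior) simp
  show ?thesis using assms(1) by (simp only: e)
qed

lemma const_zero:
  fixes f :: "real \<Rightarrow> real"
  assumes "a \<le> b" "\<And>x. a < x \<Longrightarrow> x < b \<Longrightarrow> (f has_real_derivative 0) (at x)"
    "continuous_on {a..b} f"
  shows "f b = f a"
proof -
  have "f a \<le> f b"
    by (rule DERIV_nonneg_imp_increasing_open[OF assms(1) _ assms(3)]) (use assms(2) in blast)
  moreover have "f a \<ge> f b"
    by (rule DERIV_nonpos_imp_decreasing_open[OF assms(1) _ assms(3)]) (use assms(2) in blast)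
  ultimately show ?thesis by simp
qed

lemma dF_lemma:
  fixes X Y :: "real \<Rightarrow> real"
  assumes "(X has_real_derivative Xd) (at s)" "(Y has_real_derivative Yd) (at s)"
  shows "((\<lambda>s. (X s)^2 * exp (-l*Y s)) has_real_derivative
           exp (-l*Y s) * (2 * X s * Xd - l * Yd * (X s)^2)) (at s)"
  using assms by (auto intro!: derivative_eq_intros simp: algebra_simps power2_eq_square)


lemma dK_lemma:
  fixes Xd Y :: "real \<Rightarrow> real"
  assumes "(Xd has_real_derivative Xdd) (at s)" "(Y has_real_derivative Yd) (at s)"
    "Xdd = 2*l*Yd*Xd s"
  shows "((\<lambda>s. Xd s * exp (-2*l*Y s)) has_real_derivative 0) (at s)"
  using assms by (auto intro!: derivative_eq_intros simp: algebra_simps)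

lemma dFd_lemma:
  fixes X Y Xd Yd :: "real \<Rightarrow> real"
  assumes "(X has_real_derivative X1) (at s)" "(Y has_real_derivative Y1) (at s)"
    "(Xd has_real_derivative X2) (at s)" "(Yd has_real_derivative Y2) (at s)"
  shows "((\<lambda>s. exp (-l*Y s) * (2 * X s * Xd s - l * Yd s * (X s)^2)) has_real_derivative
     exp (-l*Y s) * (-l*Y1) * (2 * X s * Xd s - l * Yd s * (X s)^2) +
       exp (-l*Y s) * (2*X1*Xd s + 2*X s*X2 - l*(Y2*(X s)^2 + Yd s*(2*X s*X1)))) (at s)"
  using assms by (auto intro!: derivative_eq_intros simp: algebra_simps power2_eq_square)

lemma alg_lemma:
  fixes l x x1 x2 y1 y2 E :: real
  assumes "l > 0" "E > 0" "2 * x * x1 - l * y1 * x^2 = 0" "x \<noteq> 0" "y1 \<noteq> 0" "y2 \<le> 0"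
    "x2 = 2*l*y1*x1"
  shows "E * (-l*y1) * (2 * x * x1 - l * y1 * x^2) +
       E * (2*x1*x1 + 2*x*x2 - l*(y2*x^2 + y1*(2*x*x1))) > 0"
proof -
  have x1: "x1 = l * y1 * x / 2" using assms(3,4) by (simp add: power2_eq_square field_simps)
  have a: "(3/2) * l^2 * y1^2 * x^2 > 0" using assms by simp
  have b: "l * y2 * x^2 \<le> 0"
    using assms(1,6) by (intro mult_nonpos_nonneg mult_nonneg_nonpos) auto
  have "2*x1*x1 + 2*x*x2 - l*(y2*x^2 + y1*(2*x*x1)) = (3/2) * l^2 * y1^2 * x^2 - l * y2 * x^2"
    unfolding assms(7) x1 by (simp add: power2_eq_square algebra_simps)
  hence "2*x1*x1 + 2*x*x2 - l*(y2*x^2 + y1*(2*x*x1)) > 0" using a b by linarith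
  thus ?thesis using assms(2,3) by simp
qed


lemma core:
  fixes Y Yd Ydd X Xd Xdd :: "real \<Rightarrow> real" and l t :: real
  assumes lpos: "l > 0"
    and der: "\<And>s. s \<in> {0..1} \<Longrightarrow> (Y has_real_derivative Yd s) (at s within {0..1}) \<and>
       (Yd has_real_derivative Ydd s) (at s within {0..1}) \<and>
       (X has_real_derivative Xd s) (at s within {0..1}) \<and>
       (Xd has_real_derivative Xdd s) (at s within {0..1}) \<and> Ydd s \<le> 0 \<and> Xdd s = 2*l*Yd s*Xd s"
    and e0: "(X 0)^2 * exp (-l*Y 0) \<le> 1" and e1: "(X 1)^2 * exp (-l*Y 1) \<le> 1"
    and t: "t \<in> {0..1}"
  shows "(X t)^2 * exp (-l*Y t) \<le> 1"
proof (rule ccontr)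
  assume "\<not> ?thesis"
  hence Ft: "(X t)^2 * exp (-l*Y t) > 1" by simp
  define F where "F s = (X s)^2 * exp (-l*Y s)" for s
  have dY0: "\<And>s. s \<in> {0..1} \<Longrightarrow> (Y has_real_derivative Yd s) (at s within {0..1})"
    and dYd0: "\<And>s. s \<in> {0..1} \<Longrightarrow> (Yd has_real_derivative Ydd s) (at s within {0..1})"
    and dX0: "\<And>s. s \<in> {0..1} \<Longrightarrow> (X has_real_derivative Xd s) (at s within {0..1})"
    and dXd0: "\<And>s. s \<in> {0..1} \<Longrightarrow> (Xd has_real_derivative Xdd s) (at s within {0..1})"
    and Ydd0: "\<And>s. s \<in> {0..1} \<Longrightarrow> Ydd s \<le> 0"
    and Xdd0: "\<And>s. s \<in> {0..1} \<Longrightarrow> Xdd s = 2*l*Yd s*Xd s"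
    using der by blast+
  have sub: "\<And>s. s \<in> {0<..<1} \<Longrightarrow> s \<in> {0..(1::real)}" by auto
  have dY: "\<And>s. s \<in> {0<..<1} \<Longrightarrow> (Y has_real_derivative Yd s) (at s)"
    using int_deriv dY0 sub by blast
  have dYd: "\<And>s. s \<in> {0<..<1} \<Longrightarrow> (Yd has_real_derivative Ydd s) (at s)"
    using int_deriv dYd0 sub by blast
  have dX: "\<And>s. s \<in> {0<..<1} \<Longrightarrow> (X has_real_derivative Xd s) (at s)"
    using int_deriv dX0 sub by blast
  have dXd: "\<And>s. s \<in> {0<..<1} \<Longrightarrow> (Xd has_real_derivative Xdd s) (at s)"
    using int_deriv dXd0 sub by blast
  have cY: "continuous_on {0..1} Y" by (rule DERIV_continuous_on, rule dY0)
  have cYd: "continuous_on {0..1} Yd" by (rule DERIV_continuous_on, rule dYd0)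
  have cX: "continuous_on {0..1} X" by (rule DERIV_continuous_on, rule dX0)
  have cXd: "continuous_on {0..1} Xd" by (rule DERIV_continuous_on, rule dXd0)
  have cF: "continuous_on {0..1} F" unfolding F_def
    by (intro continuous_intros cX cY)
  obtain t1 where t1: "t1 \<in> {0..1}" and mx: "\<And>s. s \<in> {0..1} \<Longrightarrow> F s \<le> F t1"
    using continuous_attains_sup[OF compact_Icc _ cF] by auto
  have Ft1: "F t1 > 1" using mx[OF t] Ft unfolding F_def by simp
  have "t1 \<noteq> 0" using Ft1 e0 unfolding F_def by auto
  moreover have "t1 \<noteq> 1" using Ft1 e1 unfolding F_def by auto
  ultimately have t1i: "0 < t1" "t1 < 1" using t1 by auto
  have t1o: "t1 \<in> {0<..<1}" using t1i by simp
  define P where "P s = 2 * X s * Xd s - l * Yd s * (X s)^2" for s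
  define Fd where "Fd s = exp (-l*Y s) * P s" for s
  have dF: "(F has_real_derivative Fd s) (at s)" if "s \<in> {0<..<1}" for s
    unfolding F_def Fd_def P_def using dF_lemma[OF dX[OF that] dY[OF that]] .
  have "Fd t1 = 0"
  proof (rule DERIV_local_max[OF dF[OF t1o]])
    show "0 < min t1 (1-t1)" using t1i by simp
    show "\<forall>y. \<bar>t1 - y\<bar> < min t1 (1 - t1) \<longrightarrow> F y \<le> F t1"
    proof (intro allI impI)
      fix y assume "\<bar>t1 - y\<bar> < min t1 (1 - t1)"
      hence "y \<in> {0..1}" by auto
      thus "F y \<le> F t1" by (rule mx)
    qed
  qed
  hence P0: "P t1 = 0" unfolding Fd_def by simp
  have Xne: "X t1 \<noteq> 0" using Ft1 unfolding F_def by auto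
  show False
  proof (cases "Yd t1 = 0")
    case True
    have Xd0: "Xd t1 = 0" using P0 True Xne unfolding P_def by simp
    define K where "K s = Xd s * exp (-2*l*Y s)" for s
    have dK: "(K has_real_derivative 0) (at s)" if "s \<in> {0<..<1}" for s
      unfolding K_def by (rule dK_lemma[OF dXd[OF that] dY[OF that] Xdd0[OF sub[OF that]]])
    have cK: "continuous_on {0..1} K" unfolding K_def by (intro continuous_intros cXd cY)
    have Xdz: "Xd s = 0" if "s \<in> {t1..1}" for s
    proof -
      have c: "continuous_on {t1..s} K" by (rule continuous_on_subset[OF cK]) (use that t1i in auto)
      have "K s = K t1"
        by (rule const_zero[OF _ _ c]) (use that t1i dK in auto)
      thus ?thesis using Xd0 unfolding K_def by simp
    qed
    have cX1: "continuous_on {t1..1} X" by (rule continuous_on_subset[OF cX]) (use t1i in auto)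
    have X1: "X 1 = X t1"
    proof (rule const_zero[OF _ _ cX1])
      show "t1 \<le> 1" using t1i by simp
      fix x assume x: "t1 < x" "x < 1"
      hence "(X has_real_derivative Xd x) (at x)" using t1i by (intro dX) auto
      moreover have "Xd x = 0" using x by (intro Xdz) auto
      ultimately show "(X has_real_derivative 0) (at x)" by simp
    qed
    have Ydn: "Yd s \<le> 0" if "s \<in> {t1..1}" for s
    proof -
      have c: "continuous_on {t1..s} Yd" by (rule continuous_on_subset[OF cYd]) (use that t1i in auto)
      have "Yd t1 \<ge> Yd s"
      proof (rule DERIV_nonpos_imp_decreasing_open[OF _ _ c])
        show "t1 \<le> s" using that by simp
        fix x assume x: "t1 < x" "x < s"
        hence xo: "x \<in> {0<..<1}" using that t1i by auto
        show "\<exists>y. (Yd has_real_derivative y) (at x) \<and> y \<le> 0"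
          using dYd[OF xo] Ydd0[OF sub[OF xo]] by blast
      qed
      thus ?thesis using True by simp
    qed
    have cY1: "continuous_on {t1..1} Y" by (rule continuous_on_subset[OF cY]) (use t1i in auto)
    have "Y t1 \<ge> Y 1"
    proof (rule DERIV_nonpos_imp_decreasing_open[OF _ _ cY1])
      show "t1 \<le> 1" using t1i by simp
      fix x assume x: "t1 < x" "x < 1"
      hence xo: "x \<in> {0<..<1}" using t1i by auto
      show "\<exists>y. (Y has_real_derivative y) (at x) \<and> y \<le> 0"
        using dY[OF xo] Ydn x by auto
    qed
    hence "exp (-l*Y t1) \<le> exp (-l * Y 1)" using lpos by simp
    hence "F t1 \<le> F 1" unfolding F_def X1 by (simp add: mult_left_mono)
    thus False using Ft1 e1 unfolding F_def by simp
  next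
    case False
    define Dv where "Dv = exp (-l*Y t1) * (-l*Yd t1) * (2 * X t1 * Xd t1 - l * Yd t1 * (X t1)^2) +
       exp (-l*Y t1) * (2*Xd t1*Xd t1 + 2*X t1*Xdd t1 - l*(Ydd t1*(X t1)^2 + Yd t1*(2*X t1*Xd t1)))"
    have dFd: "(Fd has_real_derivative Dv) (at t1)"
    proof -
      have e: "Fd = (\<lambda>s. exp (-l*Y s) * (2 * X s * Xd s - l * Yd s * (X s)^2))"
        unfolding Fd_def P_def by auto
      show ?thesis unfolding e Dv_def
        by (rule dFd_lemma[OF dX[OF t1o] dY[OF t1o] dXd[OF t1o] dYd[OF t1o]])
    qed
    have Dpos: "Dv > 0" unfolding Dv_def
      by (rule alg_lemma[OF lpos exp_gt_zero _ Xne False Ydd0[OF t1] Xdd0[OF t1]])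
         (use P0 in \<open>simp add: P_def\<close>)
    obtain \<delta> where \<delta>: "\<delta> > 0" "\<And>h. h > 0 \<Longrightarrow> h < \<delta> \<Longrightarrow> Fd t1 < Fd (t1 + h)"
      using DERIV_pos_inc_right[OF dFd Dpos] by auto
    define h where "h = min (\<delta>/2) ((1-t1)/2)"
    have h1: "h \<le> \<delta>/2" "h \<le> (1-t1)/2" unfolding h_def by (rule min.cobounded1, rule min.cobounded2)
    have h0: "h > 0" using \<delta>(1) t1i unfolding h_def by auto
    have h: "h > 0" "h < \<delta>" "t1 + h < 1" using h0 h1 \<delta>(1) t1i by (simp_all add: field_simps)
    have cF2: "continuous_on {t1..t1+h} F" by (rule continuous_on_subset[OF cF]) (use t1i h in auto)
    have "F t1 < F (t1 + h)"
    proof (rule DERIV_pos_imp_increasing_open[OF _ _ cF2])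
      show "t1 < t1 + h" using h by simp
      fix x assume x: "t1 < x" "x < t1 + h"
      have "Fd t1 < Fd (t1 + (x - t1))" using x h by (intro \<delta>(2)) auto
      hence "Fd x > 0" using \<open>Fd t1 = 0\<close> by simp
      moreover have "(F has_real_derivative Fd x) (at x)" using x h t1i by (intro dF) auto
      ultimately show "\<exists>y. (F has_real_derivative y) (at x) \<and> 0 < y" by blast
    qed
    moreover have "F (t1 + h) \<le> F t1" using h t1i by (intro mx) auto
    ultimately show False by simp
  qed
qed


lemma conv:
  fixes l y x :: real
  shows "(exp (- l * y / 2) * \<bar>x\<bar> \<le> 1) = (x^2 * exp (-l*y) \<le> 1)"
proof -
  have e: "exp (-l*y) = exp (- l * y / 2) * exp (- l * y / 2)"
    by (simp add: exp_add[symmetric])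
  have "(exp (- l * y / 2) * \<bar>x\<bar>)^2 = x^2 * exp (-l*y)"
    unfolding e by (simp add: power2_eq_square algebra_simps)
  moreover have "0 \<le> exp (- l * y / 2) * \<bar>x\<bar>" by simp
  ultimately show ?thesis using power_le_one_iff[of "exp (- l * y / 2) * \<bar>x\<bar>" 2] by simp
qed

lemma Vset_iff:
  assumes "d \<ge> 1"
  shows "((y, x) \<in> Vset d lam) = (\<forall>i\<in>{1..d}. (x i)^2 * exp (-lam i * y) \<le> 1)"
proof -
  have "((y, x) \<in> Vset d lam) = (\<forall>i\<in>{1..d}. exp (- lam i * y / 2) * \<bar>x i\<bar> \<le> 1)"
    unfolding Vset_def using assms by (simp add: Max_le_iff)
  thus ?thesis using conv by simp
qed

theorem mainTheorem10:
  fixes d :: nat and lam :: "nat \<Rightarrow> real"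
  assumes "d \<ge> 1"
    and "0 < lam 1"
    and "\<And>i j. 1 \<le> i \<Longrightarrow> i \<le> j \<Longrightarrow> j \<le> d \<Longrightarrow> lam i \<le> lam j"
  shows "geodesically_convex d lam (Vset d lam)"
  unfolding geodesically_convex_def
proof (intro allI impI ballI)
  fix Y X and t :: real
  assume g: "geodesic d lam Y X" and in0: "(Y 0, \<lambda>i. X i 0) \<in> Vset d lam"
    and in1: "(Y 1, \<lambda>i. X i 1) \<in> Vset d lam" and t: "t \<in> {0..1}"
  obtain Yd Ydd Xd Xdd where G: "\<forall>t\<in>{0..1::real}.
        (Y has_real_derivative Yd t) (at t within {0..1}) \<and>
        (Yd has_real_derivative Ydd t) (at t within {0..1}) \<and>
        (\<forall>i\<in>{1..d}. (X i has_real_derivative Xd i t) (at t within {0..1}) \<and>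
                     (Xd i has_real_derivative Xdd i t) (at t within {0..1})) \<and>
        Ydd t + (\<Sum>i=1..d. lam i * exp (-2 * lam i * Y t) * (Xd i t)^2) = 0 \<and>
        (\<forall>i\<in>{1..d}. Xdd i t - 2 * lam i * Yd t * Xd i t = 0)"
    using g unfolding geodesic_def by blast
  have lpos: "lam i > 0" if "i \<in> {1..d}" for i
    using assms(2) assms(3)[of 1 i] that by force
  have Ydd: "Ydd s \<le> 0" if "s \<in> {0..1}" for s
  proof -
    have "0 \<le> (\<Sum>i=1..d. lam i * exp (-2 * lam i * Y s) * (Xd i s)^2)"
    proof (intro sum_nonneg)
      fix i assume "i \<in> {1..d}"
      hence "lam i \<ge> 0" using lpos by (simp add: less_imp_le)
      thus "0 \<le> lam i * exp (-2 * lam i * Y s) * (Xd i s)^2" by simp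
    qed
    moreover have "Ydd s + (\<Sum>i=1..d. lam i * exp (-2 * lam i * Y s) * (Xd i s)^2) = 0"
      using bspec[OF G that] by blast
    ultimately show ?thesis by linarith
  qed
  show "(Y t, \<lambda>i. X i t) \<in> Vset d lam"
    unfolding Vset_iff[OF assms(1)]
  proof
    fix i assume i: "i \<in> {1..d}"
    have e0: "(X i 0)^2 * exp (-lam i * Y 0) \<le> 1" using in0 i unfolding Vset_iff[OF assms(1)] by auto
    have e1: "(X i 1)^2 * exp (-lam i * Y 1) \<le> 1" using in1 i unfolding Vset_iff[OF assms(1)] by auto
    have D: "(Y has_real_derivative Yd s) (at s within {0..1}) \<and>
       (Yd has_real_derivative Ydd s) (at s within {0..1}) \<and>
       (X i has_real_derivative Xd i s) (at s within {0..1}) \<and>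
       (Xd i has_real_derivative Xdd i s) (at s within {0..1}) \<and> Ydd s \<le> 0 \<and>
       Xdd i s = 2 * lam i * Yd s * Xd i s" if s: "s \<in> {0..1}" for s
    proof -
      have Gs: "(Y has_real_derivative Yd s) (at s within {0..1}) \<and>
        (Yd has_real_derivative Ydd s) (at s within {0..1}) \<and>
        (\<forall>i\<in>{1..d}. (X i has_real_derivative Xd i s) (at s within {0..1}) \<and>
                   (Xd i has_real_derivative Xdd i s) (at s within {0..1})) \<and>
        (\<forall>i\<in>{1..d}. Xdd i s - 2 * lam i * Yd s * Xd i s = 0)"
        using G s by blast
      hence a: "(Y has_real_derivative Yd s) (at s within {0..1})"
        "(Yd has_real_derivative Ydd s) (at s within {0..1})"
        "(X i has_real_derivative Xd i s) (at s within {0..1})"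
        "(Xd i has_real_derivative Xdd i s) (at s within {0..1})"
        "Xdd i s - 2 * lam i * Yd s * Xd i s = 0" using i by blast+
      from a(5) have "Xdd i s = 2 * lam i * Yd s * Xd i s" by simp
      with a(1-4) Ydd[OF s] show ?thesis by blast
    qed
    show "(X i t)^2 * exp (-lam i * Y t) \<le> 1"
      by (rule core[OF lpos[OF i] D e0 e1 t])
  qed
qed

end
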